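(* Let $X=(x_1,\ldots,x_N)$ with $x_n\in\mathbb{R}^D$, let $K\in\mathbb{N}$, and let $p_{nk}\in[0,1]$ ($n=1,\ldots,N$, $k=1,\ldots,K$) with $\sum_{k=1}^K p_{nk}=1$ for every $n$. Let $z_1,\ldots,z_N$ be independent random vectors, where $z_n=(z_{n1},\ldots,z_{nK})\in\{0,1\}^K$ has exactly one entry equal to $1$ and $\Pr(z_{nk}=1)=p_{nk}$. Define $r_k=\sum_{n=1}^N p_{nk}$, $w_k^{EM}=\frac{r_k}{N}$ and $w_k^{SEM}=\frac{1}{N}\sum_{n=1}^N z_{nk}$. Fix $k\in\{1,\ldots,K\}$ with $r_k>0$ and let $2e^{-r_k/3}\leq\delta\leq 1$. Then for $\lambda_w=\sqrt{\frac{3\ln(2/\delta)}{r_k}}$, with probability at least $1-\delta$, \[\left|w_k^{SEM}-w_k^{EM}\right|\leq\lambda_w\, w_k^{EM}.\]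
   Context: This describes one update step of the EM and the stochastic EM (SEM) algorithm for a Gaussian mixture: $p_{nk}=p(z_{nk}=1\mid X,\theta)$ is the posterior probability (responsibility) that component $k$ generated $x_n$ under the current parameters $\theta$; EM sets the new weight to $w_k^{EM}$, while SEM samples the assignment $z$ from these posteriors independently for each $n$ and sets the new weight to $w_k^{SEM}$. *)

theory Defs
  imports "HOL-Probability.Probability"
begin

(* r_k = sum_n p_nk ; indices n in {0..<N}, k in {0..<K} (0-based) *)
definition resp_mass :: "nat \<Rightarrow> (nat \<Rightarrow> nat \<Rightarrow> real) \<Rightarrow> nat \<Rightarrow> real" where
  "resp_mass N p k = (\<Sum>n<N. p n k)"

definition w_EM :: "nat \<Rightarrow> (nat \<Rightarrow> nat \<Rightarrow> real) \<Rightarrow> nat \<Rightarrow> real" where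
  "w_EM N p k = resp_mass N p k / real N"

definition w_SEM :: "nat \<Rightarrow> (nat \<Rightarrow> nat \<Rightarrow> 'a \<Rightarrow> real) \<Rightarrow> nat \<Rightarrow> 'a \<Rightarrow> real" where
  "w_SEM N z k \<omega> = (\<Sum>n<N. z n k \<omega>) / real N"

end

theory Submission
  imports Defs
begin

lemma ln_lower:
  fixes x :: real assumes "0 \<le> x" shows "2*x/(2+x) \<le> ln (1+x)"
proof -
  have "(\<lambda>x. ln(1+x) - 2*x/(2+x)) 0 \<le> (\<lambda>x. ln(1+x) - 2*x/(2+x)) x"
  proof (rule DERIV_nonneg_imp_nondecreasing[OF assms])
    fix y :: real assume y: "0 \<le> y" "y \<le> x"
    have "DERIV (\<lambda>x. ln(1+x) - 2*x/(2+x)) y :> (1/(1+y) - (2*(2+y) - 2*y)/(2+y)^2)"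
      using y by (auto intro!: derivative_eq_intros simp: power2_eq_square field_simps)
    moreover have "1/(1+y) - (2*(2+y) - 2*y)/(2+y)^2 = y^2/((1+y)*(2+y)^2)"
    proof -
      have "1+y > 0" "2+y>0" using y by auto
      then show ?thesis by (simp add: divide_simps) algebra
    qed
    moreover have "y^2/((1+y)*(2+y)^2) \<ge> 0" using y by simp
    ultimately show "\<exists>d. DERIV (\<lambda>x. ln(1+x) - 2*x/(2+x)) y :> d \<and> d \<ge> 0" by metis
  qed
  thus ?thesis by simp
qed

lemma exp_neg_upper:
  fixes x :: real assumes "0 \<le> x" shows "exp (-x) \<le> 1 - x + x^2/2"
proof -
  have "(\<lambda>x. 1 - x + x^2/2 - exp(-x)) 0 \<le> (\<lambda>x. 1 - x + x^2/2 - exp(-x)) x"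
  proof (rule DERIV_nonneg_imp_nondecreasing[OF assms])
    fix y :: real assume y: "0 \<le> y" "y \<le> x"
    have "DERIV (\<lambda>x. 1 - x + x^2/2 - exp(-x)) y :> (-1 + y + exp(-y))"
      by (auto intro!: derivative_eq_intros simp: power2_eq_square field_simps)
    moreover have "-1 + y + exp(-y) \<ge> 0" using exp_ge_add_one_self[of "-y"] by simp
    ultimately show "\<exists>d. DERIV (\<lambda>x. 1 - x + x^2/2 - exp(-x)) y :> d \<and> d \<ge> 0" by metis
  qed
  thus ?thesis by simp
qed

theorem theorem1:
  fixes M :: "'a measure" and N K k :: nat and p :: "nat \<Rightarrow> nat \<Rightarrow> real"
    and z :: "nat \<Rightarrow> nat \<Rightarrow> 'a \<Rightarrow> real" and \<delta> :: real
  assumes "prob_space M"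
    and p_range: "\<forall>n<N. \<forall>j<K. 0 \<le> p n j \<and> p n j \<le> 1"
    and p_sum: "\<forall>n<N. (\<Sum>j<K. p n j) = 1"
    and onehot: "\<forall>n<N. \<forall>\<omega>\<in>space M. (\<forall>j<K. z n j \<omega> \<in> {0, 1}) \<and> card {j. j < K \<and> z n j \<omega> = 1} = 1"
    and indep: "prob_space.indep_vars M (\<lambda>_. count_space UNIV)
                  (\<lambda>n \<omega>. restrict (\<lambda>j. z n j \<omega>) {..<K}) {..<N}"
    and distr: "\<forall>n<N. \<forall>j<K. measure M {\<omega> \<in> space M. z n j \<omega> = 1} = p n j"
    and k: "k < K"
    and r_pos: "resp_mass N p k > 0"
    and \<delta>: "2 * exp (- resp_mass N p k / 3) \<le> \<delta>" "\<delta> \<le> 1"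
  shows "measure M {\<omega> \<in> space M.
            \<bar>w_SEM N z k \<omega> - w_EM N p k\<bar>
              \<le> sqrt (3 * ln (2 / \<delta>) / resp_mass N p k) * w_EM N p k} \<ge> 1 - \<delta>"
proof -
  interpret prob_space M by fact
  define \<mu> where "\<mu> = resp_mass N p k"
  define Y where "Y n \<omega> = z n k \<omega>" for n \<omega>
  define X where "X \<omega> = (\<Sum>n<N. Y n \<omega>)" for \<omega>
  have mu_pos: "\<mu> > 0" using r_pos by (simp add: \<mu>_def)
  have N0: "N > 0" using r_pos by (cases N) (auto simp: resp_mass_def)
  have mu_sum: "\<mu> = (\<Sum>n<N. p n k)" by (simp add: \<mu>_def resp_mass_def)
  have Ymeas[measurable]: "Y n \<in> borel_measurable M" if "n < N" for n
  proof -
    have "(\<lambda>\<omega>. restrict (\<lambda>j. z n j \<omega>) {..<K}) \<in> measurable M (count_space UNIV)"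
      using indep that unfolding indep_vars_def by auto
    then have "(\<lambda>f. f k) \<circ> (\<lambda>\<omega>. restrict (\<lambda>j. z n j \<omega>) {..<K}) \<in> borel_measurable M"
      by (rule measurable_comp) simp
    moreover have "Y n = z n k" by (simp add: Y_def fun_eq_iff)
    ultimately show ?thesis using k by (simp add: o_def)
  qed
  have Xmeas[measurable]: "X \<in> borel_measurable M"
    unfolding X_def by (intro borel_measurable_sum) (auto intro: Ymeas)
  have Y01: "Y n \<omega> = 0 \<or> Y n \<omega> = 1" if "n < N" "\<omega> \<in> space M" for n \<omega>
    using onehot that k by (auto simp: Y_def)
  have EY: "integral\<^sup>L M (Y n) = p n k" if n: "n < N" for n
  proof -
    define A where "A = {\<omega> \<in> space M. Y n \<omega> = 1}"
    have A: "A \<in> sets M" unfolding A_def using n by measurable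
    have "integral\<^sup>L M (Y n) = integral\<^sup>L M (indicator A)"
      by (rule Bochner_Integration.integral_cong) (use Y01[OF n] in \<open>auto simp: A_def indicator_def\<close>)
    also have "\<dots> = measure M A" using A by (simp add: emeasure_finite)
    also have "\<dots> = p n k" using distr n k by (simp add: A_def Y_def)
    finally show ?thesis .
  qed
  have MGF: "integrable M (\<lambda>\<omega>. exp (t * X \<omega>)) \<and>
       integral\<^sup>L M (\<lambda>\<omega>. exp (t * X \<omega>)) \<le> exp (\<mu> * (exp t - 1))" for t :: real
  proof -
    have eq: "exp (t * X \<omega>) = (\<Prod>n<N. exp (t * Y n \<omega>))" for \<omega>
      by (simp add: X_def sum_distrib_left exp_sum)
    have ind0: "indep_vars (\<lambda>_. borel) (\<lambda>n \<omega>. (\<lambda>f. exp (t * f k)) (restrict (\<lambda>j. z n j \<omega>) {..<K})) {..<N}"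
      by (rule indep_vars_compose2[OF indep]) simp
    have ind: "indep_vars (\<lambda>_. borel) (\<lambda>n \<omega>. exp (t * Y n \<omega>)) {..<N}"
      using ind0 k by (simp add: Y_def)
    have int: "integrable M (\<lambda>\<omega>. exp (t * Y n \<omega>))" if n: "n < N" for n
    proof (rule integrable_const_bound[where B="exp \<bar>t\<bar>"])
      show "AE x in M. norm (exp (t * Y n x)) \<le> exp \<bar>t\<bar>"
        using Y01[OF n] by (auto intro!: AE_I2) (metis abs_ge_self exp_le_cancel_iff mult.right_neutral mult_zero_right exp_ge_zero order_trans abs_ge_zero exp_zero one_le_exp_iff)
    qed (use n in measurable)
    have EexpY: "integral\<^sup>L M (\<lambda>\<omega>. exp (t * Y n \<omega>)) = 1 + p n k * (exp t - 1)" if n: "n < N" for n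
    proof -
      have "integral\<^sup>L M (\<lambda>\<omega>. exp (t * Y n \<omega>)) = integral\<^sup>L M (\<lambda>\<omega>. 1 + (exp t - 1) * Y n \<omega>)"
      proof (rule Bochner_Integration.integral_cong)
        fix x assume "x \<in> space M"
        then have "Y n x = 0 \<or> Y n x = 1" by (rule Y01[OF n])
        then show "exp (t * Y n x) = 1 + (exp t - 1) * Y n x" by auto
      qed simp
      also have "\<dots> = 1 + (exp t - 1) * integral\<^sup>L M (Y n)"
      proof -
        have "AE x in M. \<bar>Y n x\<bar> \<le> 1" using Y01[OF n] by (auto intro!: AE_I2) (metis abs_0 abs_1 order_refl zero_le_one)
        then have "integrable M (Y n)" using n by (intro integrable_const_bound[where B=1]) auto
        then show ?thesis by (subst Bochner_Integration.integral_add) (auto simp: prob_space)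
      qed
      finally show ?thesis using EY[OF n] by simp
    qed
    have integ: "integrable M (\<lambda>\<omega>. exp (t * X \<omega>))"
      unfolding eq by (rule indep_vars_integrable[OF _ ind]) (auto intro: int)
    have "integral\<^sup>L M (\<lambda>\<omega>. exp (t * X \<omega>)) = (\<Prod>n<N. integral\<^sup>L M (\<lambda>\<omega>. exp (t * Y n \<omega>)))"
      unfolding eq by (rule indep_vars_lebesgue_integral[OF _ ind]) (auto intro: int)
    also have "\<dots> = (\<Prod>n<N. 1 + p n k * (exp t - 1))"
      by (rule prod.cong) (auto simp: EexpY)
    also have "\<dots> \<le> (\<Prod>n<N. exp (p n k * (exp t - 1)))"
    proof (rule prod_mono)
      fix n assume "n \<in> {..<N}"
      then have "0 \<le> p n k" "p n k \<le> 1" using p_range k by auto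
      moreover have "exp t - 1 \<ge> -1" by (simp add: less_imp_le)
      ultimately have "p n k * (exp t - 1) \<ge> p n k * (-1)" by (intro mult_left_mono) auto
      then have 1: "0 \<le> 1 + p n k * (exp t - 1)" using \<open>p n k \<le> 1\<close> by linarith
      have 2: "1 + p n k * (exp t - 1) \<le> exp (p n k * (exp t - 1))"
        using exp_ge_add_one_self[of "p n k * (exp t - 1)"] by linarith
      show "0 \<le> 1 + p n k * (exp t - 1) \<and> 1 + p n k * (exp t - 1) \<le> exp (p n k * (exp t - 1))"
        using 1 2 by blast
    qed
    also have "\<dots> = exp (\<mu> * (exp t - 1))"
    proof -
      have "(\<Prod>n<N. exp (p n k * (exp t - 1))) = exp (\<Sum>n<N. p n k * (exp t - 1))"
        by (rule exp_sum[symmetric]) simp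
      also have "(\<Sum>n<N. p n k * (exp t - 1)) = \<mu> * (exp t - 1)"
        unfolding mu_sum by (rule sum_distrib_right[symmetric])
      finally show ?thesis .
    qed
    finally show ?thesis using integ by simp
  qed
  have tail: "measure M {\<omega> \<in> space M. c \<le> t * X \<omega>} \<le> exp (\<mu> * (exp t - 1) - c)" for t c :: real
  proof -
    have "{\<omega> \<in> space M. c \<le> t * X \<omega>} = {\<omega> \<in> space M. exp c \<le> exp (t * X \<omega>)}" by simp
    also have "measure M \<dots> \<le> integral\<^sup>L M (\<lambda>\<omega>. exp (t * X \<omega>)) / exp c"
      by (rule integral_Markov_inequality_measure[where A="space M"]) (use MGF in auto)
    also have "\<dots> \<le> exp (\<mu> * (exp t - 1)) / exp c"
      using MGF[of t] by (simp add: divide_right_mono)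
    also have "\<dots> = exp (\<mu> * (exp t - 1) - c)" by (simp add: exp_diff)
    finally show ?thesis .
  qed
  define lam where "lam = sqrt (3 * ln (2 / \<delta>) / \<mu>)"
  have dpos: "\<delta> > 0" using \<delta>(1) by (smt (verit) exp_gt_zero)
  have lnpos: "ln (2 / \<delta>) > 0" using dpos \<delta>(2) by simp
  have lam_sq: "lam^2 = 3 * ln (2 / \<delta>) / \<mu>" unfolding lam_def using lnpos mu_pos by simp
  have lam_pos: "lam > 0" unfolding lam_def using lnpos mu_pos by simp
  have "ln (2 / \<delta>) \<le> \<mu> / 3"
  proof -
    have "2 / \<delta> \<le> exp (\<mu> / 3)" using \<delta>(1) dpos
      by (simp add: \<mu>_def divide_simps exp_minus) (simp add: mult.commute)
    then have "ln (2/\<delta>) \<le> ln (exp (\<mu>/3))" using dpos by (subst ln_le_cancel_iff) auto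
    then show ?thesis by simp
  qed
  then have "lam^2 * \<mu> \<le> 1 * \<mu>" using lam_sq mu_pos by simp
  then have "lam^2 \<le> 1" using mu_pos by (rule mult_right_le_imp_le)
  then have lam1: "lam \<le> 1" using lam_pos by (simp add: power_le_one_iff abs_le_square_iff)
  have key: "exp (- (lam^2 * \<mu> / 3)) = \<delta> / 2"
  proof -
    have "- (lam^2 * \<mu> / 3) = - ln (2 / \<delta>)" using lam_sq mu_pos by simp
    also have "\<dots> = ln (\<delta> / 2)" using dpos by (simp add: ln_div)
    finally show ?thesis using dpos by simp
  qed
  define A where "A = {\<omega> \<in> space M. (1 + lam) * \<mu> \<le> X \<omega>}"
  define B where "B = {\<omega> \<in> space M. X \<omega> \<le> (1 - lam) * \<mu>}"
  have A_meas: "A \<in> sets M" unfolding A_def by measurable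
  have B_meas: "B \<in> sets M" unfolding B_def by measurable
  have PA: "measure M A \<le> \<delta> / 2"
  proof -
    define t where "t = ln (1 + lam)"
    have tpos: "t > 0" unfolding t_def using lam_pos by simp
    have "A = {\<omega> \<in> space M. t * ((1 + lam) * \<mu>) \<le> t * X \<omega>}"
      unfolding A_def using tpos by auto
    then have "measure M A \<le> exp (\<mu> * (exp t - 1) - t * ((1 + lam) * \<mu>))"
      using tail by simp
    also have "\<dots> \<le> exp (- (lam^2 * \<mu> / 3))"
    proof -
      have et: "exp t = 1 + lam" unfolding t_def using lam_pos by simp
      have l: "2*lam/(2+lam) \<le> t" unfolding t_def using ln_lower lam_pos by simp
      have "2*lam/(2+lam) * (1+lam) \<le> t * (1 + lam)" by (rule mult_right_mono) (use l lam_pos in auto)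
      moreover have "lam - 2*lam/(2+lam) * (1+lam) = - (lam^2)/(2+lam)" using lam_pos
        by (simp add: field_simps power2_eq_square)
      moreover have "lam^2/3 \<le> lam^2/(2+lam)" using lam_pos lam1
        by (intro divide_left_mono) auto
      ultimately have "lam - t * (1 + lam) \<le> - (lam^2)/3" by linarith
      then have "\<mu> * (lam - t * (1 + lam)) \<le> \<mu> * (- (lam^2)/3)" by (rule mult_left_mono) (use mu_pos in auto)
      then show ?thesis using et by (simp add: algebra_simps)
    qed
    finally show ?thesis using key by simp
  qed
  have PB: "measure M B \<le> \<delta> / 2"
  proof -
    define t where "t = - lam"
    have "B = {\<omega> \<in> space M. t * ((1 - lam) * \<mu>) \<le> t * X \<omega>}"
      unfolding B_def t_def using lam_pos by auto
    then have "measure M B \<le> exp (\<mu> * (exp t - 1) - t * ((1 - lam) * \<mu>))"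
      using tail by simp
    also have "\<dots> \<le> exp (- (lam^2 * \<mu> / 3))"
    proof -
      have e: "exp t \<le> 1 - lam + lam^2/2" unfolding t_def using exp_neg_upper lam_pos by simp
      have "exp t - 1 - t * (1 - lam) \<le> - (lam^2)/3"
      proof -
        have "t*(1-lam) = -lam + lam^2" by (simp add: t_def algebra_simps power2_eq_square)
        moreover have "lam^2 \<ge> 0" by simp
        ultimately show ?thesis using e by linarith
      qed
      then have "\<mu> * (exp t - 1 - t * (1 - lam)) \<le> \<mu> * (- (lam^2)/3)" by (rule mult_left_mono) (use mu_pos in auto)
      then show ?thesis by (simp add: algebra_simps)
    qed
    finally show ?thesis using key by simp
  qed
  define G where "G = {\<omega> \<in> space M.
            \<bar>w_SEM N z k \<omega> - w_EM N p k\<bar>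
              \<le> sqrt (3 * ln (2 / \<delta>) / resp_mass N p k) * w_EM N p k}"
  have G_eq: "G = {\<omega> \<in> space M. \<bar>X \<omega> - \<mu>\<bar> \<le> lam * \<mu>}"
  proof -
    have "\<bar>w_SEM N z k \<omega> - w_EM N p k\<bar> = \<bar>X \<omega> - \<mu>\<bar> / N" for \<omega>
      using N0 by (simp add: w_SEM_def w_EM_def X_def Y_def \<mu>_def diff_divide_distrib[symmetric])
    moreover have "sqrt (3 * ln (2 / \<delta>) / resp_mass N p k) * w_EM N p k = lam * \<mu> / N"
      by (simp add: lam_def \<mu>_def w_EM_def)
    ultimately show ?thesis using N0 unfolding G_def by (auto simp: divide_right_mono divide_le_cancel)
  qed
  have G_meas: "G \<in> sets M" unfolding G_eq by measurable
  have sub: "space M - G \<subseteq> A \<union> B"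
    unfolding G_eq A_def B_def by (auto simp: algebra_simps abs_if split: if_splits)
  have "measure M (space M - G) \<le> measure M (A \<union> B)"
    using sub A_meas B_meas by (intro finite_measure_mono) auto
  also have "\<dots> \<le> measure M A + measure M B"
    using A_meas B_meas by (rule measure_Un_le)
  finally have "measure M (space M - G) \<le> \<delta>" using PA PB by simp
  moreover have "measure M (space M - G) = 1 - measure M G" using G_meas by (rule prob_compl)
  ultimately show ?thesis unfolding G_def by simp
qed

end
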